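(* Fix $r^+\ge 8$. There is a constant $c_0=c_0(r^+)>1$ (depending only on $r^+$, not on $d$ or the bodies) such that for every convex body $K$ in $\mathbb{R}^d$, every $x\in\operatorname{int}(K)$, and every $y\in B_K(x,r^+)$, $$\tfrac{1}{c_0}A(x)\subseteq \mathcal{B}_K(y)\subseteq c_0A(x).$$
   Context: $K$ is a convex body (compact convex, nonempty interior). For $x\in\operatorname{int}(K)$, $A(x):=(K-x)\cap(x-K)$ (the Macbeath region $K\cap(2x-K)$ translated to the origin). $B_K(x,r)$ is the closed ball of radius $r$ about $x$ in the Hilbert metric $d_K(x,y)=\frac12\ln\left(\frac{\|y-x'\|}{\|x-x'\|}\frac{\|x-y'\|}{\|y-y'\|}\right)$, where $y'$ (resp. $x'$) is where the ray from $x$ through $y$ (resp. from $y$ through $x$) meets $\partial K$. For a convex body $E$ with $O\in\operatorname{int}E$, $\|v\|_E=\inf\{\lambda>0: v\in\lambda E\}$. The Hilbert Finsler ball at $y\in\operatorname{int}(K)$ is $\mathcal{B}_K(y)=\{v\in\mathbb{R}^d: \frac12(\|v\|_{K-y}+\|-v\|_{K-y})\le 1\}$. *)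

theory Defs
  imports "HOL-Analysis.Analysis"
begin

text \<open>Euclidean d-space is modelled uniformly in d as the coordinate subspace of
  functions vanishing at all indices i >= d.  This lets the statement quantify
  over the dimension d inside the existential for the constant.\<close>

type_synonym vec = "nat \<Rightarrow>\<^sub>C real"

definition Rd :: "nat \<Rightarrow> vec set" where
  "Rd d = {f. \<forall>i\<ge>d. apply_bcontfun f i = 0}"

definition rel_int_in :: "vec set \<Rightarrow> vec set \<Rightarrow> vec set" where
  "rel_int_in V K = (top_of_set V) interior_of K"

definition convex_body_in :: "vec set \<Rightarrow> vec set \<Rightarrow> bool" where
  "convex_body_in V K \<longleftrightarrow> K \<subseteq> V \<and> convex K \<and> compact K \<and> rel_int_in V K \<noteq> {}"

definition macbeath :: "vec set \<Rightarrow> vec \<Rightarrow> vec set" where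
  "macbeath K x = ((\<lambda>k. k - x) ` K) \<inter> ((\<lambda>k. x - k) ` K)"

definition hilbert_dist :: "vec set \<Rightarrow> vec set \<Rightarrow> vec \<Rightarrow> vec \<Rightarrow> real" where
  "hilbert_dist V K x y =
     (if x = y then 0 else
      (let y' = (SOME p. p \<in> K - rel_int_in V K \<and> (\<exists>t\<ge>0. p = x + t *\<^sub>R (y - x)));
           x' = (SOME p. p \<in> K - rel_int_in V K \<and> (\<exists>t\<ge>0. p = y + t *\<^sub>R (x - y)))
       in ln ((norm (y - x') / norm (x - x')) * (norm (x - y') / norm (y - y'))) / 2))"

definition hilbert_ball :: "vec set \<Rightarrow> vec set \<Rightarrow> vec \<Rightarrow> real \<Rightarrow> vec set" where
  "hilbert_ball V K x r = {y \<in> rel_int_in V K. hilbert_dist V K x y \<le> r}"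

definition mink_gauge :: "vec set \<Rightarrow> vec \<Rightarrow> real" where
  "mink_gauge E v = Inf {l. l > 0 \<and> v \<in> (\<lambda>e. l *\<^sub>R e) ` E}"

definition finsler_ball :: "vec set \<Rightarrow> vec set \<Rightarrow> vec \<Rightarrow> vec set" where
  "finsler_ball V K y =
     {v \<in> V. (mink_gauge ((\<lambda>k. k - y) ` K) v + mink_gauge ((\<lambda>k. k - y) ` K) (- v)) / 2 \<le> 1}"

end

theory Submission
  imports Defs
begin

lemma subspace_Rd: "subspace (Rd d)"
  unfolding subspace_def Rd_def by auto

lemma relint_iff:
  "p \<in> rel_int_in V K \<longleftrightarrow> p \<in> V \<and> (\<exists>e>0. ball p e \<inter> V \<subseteq> K)"
proof
  assume "p \<in> rel_int_in V K"
  then obtain T where T: "openin (top_of_set V) T" "p \<in> T" "T \<subseteq> K"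
    unfolding rel_int_in_def interior_of_def by auto
  then obtain U where U: "open U" "T = V \<inter> U" using openin_open by metis
  then obtain e where "e>0" "ball p e \<subseteq> U" using T(2) open_contains_ball by blast
  then show "p \<in> V \<and> (\<exists>e>0. ball p e \<inter> V \<subseteq> K)" using T U by blast
next
  assume "p \<in> V \<and> (\<exists>e>0. ball p e \<inter> V \<subseteq> K)"
  then obtain e where "p \<in> V" "e>0" "ball p e \<inter> V \<subseteq> K" by blast
  moreover have "openin (top_of_set V) (V \<inter> ball p e)" using openin_open by blast
  ultimately show "p \<in> rel_int_in V K"
    unfolding rel_int_in_def interior_of_def by (auto intro!: exI[of _ "V \<inter> ball p e"])
qed

lemma segment_relint:
  assumes V: "subspace V" and KV: "K \<subseteq> V" and cK: "convex K"
    and x: "x \<in> rel_int_in V K" and z: "z \<in> K" and t: "0 \<le> t" "t < 1"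
  shows "x + t *\<^sub>R (z - x) \<in> rel_int_in V K"
proof -
  obtain e where xV: "x \<in> V" and e: "e>0" "ball x e \<inter> V \<subseteq> K" using x relint_iff by blast
  define p where "p = x + t *\<^sub>R (z - x)"
  have zV: "z \<in> V" using z KV by auto
  have pV: "p \<in> V" unfolding p_def using V xV zV
    by (simp add: subspace_add subspace_diff subspace_scale)
  have "ball p ((1 - t) * e) \<inter> V \<subseteq> K"
  proof
    fix q assume q: "q \<in> ball p ((1 - t) * e) \<inter> V"
    define w where "w = x + (1 / (1 - t)) *\<^sub>R (q - p)"
    have wV: "w \<in> V" unfolding w_def using V xV pV q
      by (simp add: subspace_add subspace_diff subspace_scale)
    have "dist x w = norm (q - p) / (1 - t)" unfolding w_def dist_norm using t by simp
    also have "\<dots> < e" using q t by (simp add: dist_norm norm_minus_commute field_simps)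
    finally have "w \<in> K" using e wV by auto
    have "(1 - t) *\<^sub>R w = (1 - t) *\<^sub>R x + (q - p)" unfolding w_def using t
      by (simp add: algebra_simps)
    then have "q = (1 - t) *\<^sub>R w + t *\<^sub>R z" unfolding p_def
      by (simp add: algebra_simps)
    then show "q \<in> K" using cK \<open>w \<in> K\<close> z t unfolding convex_def by auto
  qed
  then show ?thesis using pV t e relint_iff unfolding p_def[symmetric]
    by (metis diff_gt_0_iff_gt mult_pos_pos)
qed

lemma exists_bd:
  assumes V: "subspace V" and KV: "K \<subseteq> V" and cK: "compact K"
    and x: "x \<in> K" and y: "y \<in> K" and xy: "x \<noteq> y"
  shows "\<exists>p. p \<in> K - rel_int_in V K \<and> (\<exists>t\<ge>0. p = x + t *\<^sub>R (y - x))"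
proof -
  define f where "f = (\<lambda>t::real. x + t *\<^sub>R (y - x))"
  define T where "T = {0..} \<inter> f -` K"
  have cf: "\<And>t. isCont f t" unfolding f_def by (intro continuous_intros)
  have "closed (f -` K)" using continuous_closed_vimage[OF compact_imp_closed[OF cK]] cf by blast
  then have clT: "closed T" unfolding T_def by (intro closed_Int) auto
  obtain B where B: "\<And>k. k \<in> K \<Longrightarrow> norm k \<le> B"
    using compact_imp_bounded[OF cK] bounded_iff by blast
  have nyx: "norm (y - x) > 0" using xy by simp
  have bd: "t \<le> (B + norm x) / norm (y - x)" if "t \<in> T" for t
  proof -
    have "t * norm (y - x) = norm (f t - x)" using that unfolding T_def f_def by simp
    also have "\<dots> \<le> norm (f t) + norm x" by (rule norm_triangle_ineq4)
    also have "\<dots> \<le> B + norm x" using B that unfolding T_def by auto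
    finally show ?thesis using nyx by (simp add: field_simps)
  qed
  have bdd: "bdd_above T" using bd by (rule bdd_aboveI)
  have "1 \<in> T" unfolding T_def f_def using y by simp
  then have ne: "T \<noteq> {}" by auto
  define ts where "ts = Sup T"
  have tsT: "ts \<in> T" unfolding ts_def using closed_contains_Sup[OF ne bdd clT] .
  have ts_ge: "ts \<ge> 0" using tsT unfolding T_def by auto
  have "f ts \<notin> rel_int_in V K"
  proof
    assume "f ts \<in> rel_int_in V K"
    then obtain e where pV: "f ts \<in> V" and e: "e > 0" "ball (f ts) e \<inter> V \<subseteq> K"
      using relint_iff by blast
    define h where "h = e / (2 * norm (y - x))"
    have h: "h > 0" unfolding h_def using e nyx by simp
    have "f (ts + h) = f ts + h *\<^sub>R (y - x)" unfolding f_def by (simp add: algebra_simps)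
    moreover have "norm (h *\<^sub>R (y - x)) = e / 2" unfolding h_def using nyx h e by simp
    moreover have "f ts + h *\<^sub>R (y - x) \<in> V" using V pV x y KV
      by (meson in_mono subspace_add subspace_diff subspace_scale)
    ultimately have "f (ts + h) \<in> K" using e by (auto simp: dist_norm)
    then have "ts + h \<in> T" unfolding T_def using ts_ge h by simp
    then have "ts + h \<le> ts" unfolding ts_def using bdd by (rule cSup_upper)
    then show False using h by simp
  qed
  then show ?thesis using tsT ts_ge unfolding T_def f_def by auto
qed

lemma relint_sub: "rel_int_in V K \<subseteq> K"
  using relint_iff by fastforce

lemma ray_pt:
  assumes V: "subspace V" and KV: "K \<subseteq> V" and cvK: "convex K" and cK: "compact K"
    and x: "x \<in> rel_int_in V K" and y: "y \<in> rel_int_in V K" and xy: "x \<noteq> y"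
    and p: "p = (SOME p. p \<in> K - rel_int_in V K \<and> (\<exists>t\<ge>0. p = x + t *\<^sub>R (y - x)))"
  shows "\<exists>t>1. p = x + t *\<^sub>R (y - x) \<and> p \<in> K"
proof -
  have "\<exists>p. p \<in> K - rel_int_in V K \<and> (\<exists>t\<ge>0. p = x + t *\<^sub>R (y - x))"
    using exists_bd[OF V KV cK _ _ xy] x y relint_sub by blast
  from someI_ex[OF this] p obtain t where pK: "p \<in> K" "p \<notin> rel_int_in V K" "t \<ge> 0"
    "p = x + t *\<^sub>R (y - x)" by auto
  have "t > 1"
  proof (rule ccontr)
    assume "\<not> t > 1"
    then consider "t < 1" | "t = 1" by linarith
    then show False
    proof cases
      case 1
      then show False using segment_relint[OF V KV cvK x _ \<open>t \<ge> 0\<close> 1] y relint_sub pK by blast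
    next
      case 2
      then show False using pK y by simp
    qed
  qed
  then show ?thesis using pK by blast
qed

lemma hilbert_key:
  assumes V: "subspace V" and KV: "K \<subseteq> V" and cvK: "convex K" and cK: "compact K"
    and x: "x \<in> rel_int_in V K" and y: "y \<in> rel_int_in V K" and xy: "x \<noteq> y"
    and hd: "hilbert_dist V K x y \<le> r"
  shows "x + (exp (2*r) / (exp (2*r) - 1)) *\<^sub>R (y - x) \<in> K \<and>
         y + (exp (2*r) / (exp (2*r) - 1)) *\<^sub>R (x - y) \<in> K"
proof -
  define y' where "y' = (SOME p. p \<in> K - rel_int_in V K \<and> (\<exists>t\<ge>0. p = x + t *\<^sub>R (y - x)))"
  define x' where "x' = (SOME p. p \<in> K - rel_int_in V K \<and> (\<exists>t\<ge>0. p = y + t *\<^sub>R (x - y)))"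
  obtain t where t: "t > 1" "y' = x + t *\<^sub>R (y - x)" "y' \<in> K"
    using ray_pt[OF V KV cvK cK x y xy y'_def] by blast
  obtain s where s: "s > 1" "x' = y + s *\<^sub>R (x - y)" "x' \<in> K"
    using ray_pt[OF V KV cvK cK y x _ x'_def] xy by metis
  define n where "n = norm (x - y)"
  have n: "n > 0" using xy n_def by simp
  have "y - x' = (- s) *\<^sub>R (x - y)" using s by (simp add: algebra_simps)
  then have n1: "norm (y - x') = s * n" using s n_def by simp
  have "x - x' = (1 - s) *\<^sub>R (x - y)" using s by (simp add: algebra_simps)
  then have n2: "norm (x - x') = (s - 1) * n" using s n_def by simp
  have "x - y' = (- t) *\<^sub>R (y - x)" using t by (simp add: algebra_simps)
  then have n3: "norm (x - y') = t * n" using t n_def by (simp add: norm_minus_commute)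
  have "y - y' = (1 - t) *\<^sub>R (y - x)" using t by (simp add: algebra_simps)
  then have n4: "norm (y - y') = (t - 1) * n" using t n_def by (simp add: norm_minus_commute)
  have "hilbert_dist V K x y = ln ((s / (s - 1)) * (t / (t - 1))) / 2"
    unfolding hilbert_dist_def Let_def y'_def[symmetric] x'_def[symmetric] using xy n
    by (simp add: n1 n2 n3 n4)
  with hd have "ln ((s / (s - 1)) * (t / (t - 1))) \<le> 2 * r" by simp
  moreover have pos: "(s / (s - 1)) * (t / (t - 1)) > 0" using s t by simp
  ultimately have P: "(s / (s - 1)) * (t / (t - 1)) \<le> exp (2 * r)"
    by (metis exp_le_cancel_iff exp_ln)
  define R where "R = exp (2 * r)"
  have fs: "s / (s - 1) \<ge> 1" and ft: "t / (t - 1) \<ge> 1" using s t by (simp_all add: field_simps)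
  have "t / (t - 1) \<le> R" using P fs ft unfolding R_def
    by (smt (verit) mult_le_cancel_right1)
  moreover have "s / (s - 1) \<le> R" using P fs ft unfolding R_def
    by (smt (verit) mult_le_cancel_left1)
  ultimately have tR: "t / (t - 1) \<le> R" and sR: "s / (s - 1) \<le> R" by auto
  have R1: "R > 1" using tR t by (smt (verit) divide_le_eq_1 ft)
  have at: "R / (R - 1) \<le> t" using tR t R1 by (simp add: field_simps)
  have as: "R / (R - 1) \<le> s" using sR s R1 by (simp add: field_simps)
  have a0: "R / (R - 1) \<ge> 0" using R1 by simp
  have seg: "a + c *\<^sub>R (b - a) \<in> K" if "a \<in> K" "a + u *\<^sub>R (b - a) \<in> K" "0 \<le> c" "c \<le> u" "u > 0"
    for a b c u
  proof -
    have "a + c *\<^sub>R (b - a) = (1 - c / u) *\<^sub>R a + (c / u) *\<^sub>R (a + u *\<^sub>R (b - a))"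
      using that by (simp add: algebra_simps)
    moreover have "1 - c / u \<ge> 0" "c / u \<ge> 0" using that by (simp_all add: field_simps)
    ultimately show ?thesis using cvK that unfolding convex_def by auto
  qed
  have "x + (R / (R - 1)) *\<^sub>R (y - x) \<in> K"
    using seg[where a=x and b=y and c="R/(R-1)" and u=t] x relint_sub t a0 at by auto
  moreover have "y + (R / (R - 1)) *\<^sub>R (x - y) \<in> K"
    using seg[where a=y and b=x and c="R/(R-1)" and u=s] y relint_sub s a0 as by auto
  ultimately show ?thesis unfolding R_def by simp
qed

lemma shiftL:
  assumes cvK: "convex K" and x: "x \<in> K" and q: "x + a *\<^sub>R (y - x) \<in> K" and a: "a \<ge> 1"
    and w: "x + w \<in> K" and m: "0 \<le> m" "m \<le> 1 - 1 / a"
  shows "y + m *\<^sub>R w \<in> K"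
proof -
  define s where "s = 1 / a"
  have s: "0 < s" "s \<le> 1" using a unfolding s_def by auto
  show ?thesis
  proof (cases "s = 1")
    case True
    then have "a = 1" unfolding s_def by simp
    then show ?thesis using q m True s_def by simp
  next
    case False
    then have s1: "s < 1" using s by simp
    define l where "l = m / (1 - s)"
    have l: "0 \<le> l" "l \<le> 1" unfolding l_def using m s1 s_def by (auto simp: field_simps)
    have z: "x + l *\<^sub>R w \<in> K"
    proof -
      have "x + l *\<^sub>R w = (1 - l) *\<^sub>R x + l *\<^sub>R (x + w)" by (simp add: algebra_simps)
      then show ?thesis using cvK x w l unfolding convex_def by auto
    qed
    have sa: "s * a = 1" unfolding s_def using a by simp
    have "s *\<^sub>R (x + a *\<^sub>R (y - x)) + (1 - s) *\<^sub>R (x + l *\<^sub>R w)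
        = x + (s * a) *\<^sub>R (y - x) + ((1 - s) * l) *\<^sub>R w" by (simp add: algebra_simps)
    also have "\<dots> = y + m *\<^sub>R w" using sa s1 unfolding l_def by simp
    finally have eq: "s *\<^sub>R (x + a *\<^sub>R (y - x)) + (1 - s) *\<^sub>R (x + l *\<^sub>R w) = y + m *\<^sub>R w" .
    have "s *\<^sub>R (x + a *\<^sub>R (y - x)) + (1 - s) *\<^sub>R (x + l *\<^sub>R w) \<in> K"
      using cvK q z s unfolding convex_def by auto
    then show ?thesis using eq by simp
  qed
qed

lemma gauge_le1:
  assumes "v \<in> E" shows "mink_gauge E v \<le> 1"
  unfolding mink_gauge_def
  by (rule cInf_lower) (use assms in \<open>auto intro: bdd_belowI[of _ 0] simp: image_iff\<close>)

lemma G1: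
  assumes "v \<in> V" "v \<in> (\<lambda>k. k - y) ` K" "- v \<in> (\<lambda>k. k - y) ` K"
  shows "v \<in> finsler_ball V K y"
  using gauge_le1[OF assms(2)] gauge_le1[OF assms(3)] assms(1) unfolding finsler_ball_def by simp

lemma G2:
  assumes V: "subspace V" and KV: "K \<subseteq> V" and cvK: "convex K" and y: "y \<in> rel_int_in V K"
    and v: "v \<in> finsler_ball V K y"
  shows "y + (1/3) *\<^sub>R v \<in> K \<and> y + (1/3) *\<^sub>R (- v) \<in> K"
proof -
  obtain e where yV: "y \<in> V" and e: "e > 0" "ball y e \<inter> V \<subseteq> K" using y relint_iff by blast
  have yK: "y \<in> K" using y relint_sub by blast
  define E where "E = (\<lambda>k. k - y) ` K"
  define S where "S u = {l. l > 0 \<and> u \<in> (\<lambda>e. l *\<^sub>R e) ` E}" for u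
  have ne: "S u \<noteq> {}" if "u \<in> V" for u
  proof -
    define l where "l = 2 * (norm u + 1) / e"
    have "2 * (norm u + 1) > 0" by (smt (verit) norm_ge_zero)
    then have l: "l > 0" unfolding l_def using e by simp
    have "norm ((1 / l) *\<^sub>R u) = norm u * e / (2 * (norm u + 1))"
      unfolding l_def using e by simp
    also have "\<dots> < e"
    proof -
      have p2: "2 * (norm u + 1) > 0" by (smt (verit) norm_ge_zero)
      have "norm u * e < (2 * (norm u + 1)) * e" using e by (intro mult_strict_right_mono) (auto, smt (verit) norm_ge_zero)
      then show ?thesis using p2 by (simp add: divide_less_eq mult.commute)
    qed
    finally have "y + (1 / l) *\<^sub>R u \<in> ball y e" by (simp add: dist_norm)
    moreover have "y + (1 / l) *\<^sub>R u \<in> V" using V yV that by (simp add: subspace_add subspace_scale)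
    ultimately have "y + (1 / l) *\<^sub>R u \<in> K" using e by blast
    then have "(1 / l) *\<^sub>R u \<in> E" unfolding E_def by (auto simp: image_iff intro!: bexI[of _ "y + (1 / l) *\<^sub>R u"])
    moreover have "u = l *\<^sub>R ((1 / l) *\<^sub>R u)" using l by simp
    ultimately have "l \<in> S u" unfolding S_def using l by blast
    then show ?thesis by blast
  qed
  have g0: "mink_gauge E u \<ge> 0" if "u \<in> V" for u
    unfolding mink_gauge_def using ne[OF that] unfolding S_def
    by (intro cInf_greatest) auto
  have main: "y + (1/3) *\<^sub>R u \<in> K" if uV: "u \<in> V" and lt: "mink_gauge E u < 3" for u
  proof -
    have "Inf (S u) < 3" using lt unfolding mink_gauge_def S_def .
    then obtain l where l: "l \<in> S u" "l < 3" using ne[OF uV]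
      by (meson cInf_lessD)
    then obtain k where k: "k \<in> K" "u = l *\<^sub>R (k - y)" "l > 0" unfolding S_def E_def by auto
    have "y + (1/3) *\<^sub>R u = y + (1/3) *\<^sub>R (l *\<^sub>R (k - y))" using k by simp
    also have "\<dots> = (1 - l/3) *\<^sub>R y + (l/3) *\<^sub>R k" by (simp add: algebra_simps)
    finally have "y + (1/3) *\<^sub>R u = (1 - l/3) *\<^sub>R y + (l/3) *\<^sub>R k" .
    moreover have "1 - l/3 \<ge> 0" "l/3 \<ge> 0" using l k by auto
    ultimately show ?thesis using cvK yK k unfolding convex_def by auto
  qed
  have vV: "v \<in> V" and sum: "mink_gauge E v + mink_gauge E (- v) \<le> 2"
    using v unfolding finsler_ball_def E_def by auto
  have mvV: "- v \<in> V" using V vV by (simp add: subspace_neg)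
  have "mink_gauge E v < 3" using sum g0[OF mvV] by linarith
  moreover have "mink_gauge E (- v) < 3" using sum g0[OF vV] by linarith
  ultimately show ?thesis using main vV mvV by blast
qed

theorem lemma3p3:
  fixes rplus :: real
  assumes "rplus \<ge> 8"
  shows "\<exists>c0 > 1. \<forall>(d::nat) (K::vec set) (x::vec) (y::vec).
           convex_body_in (Rd d) K \<longrightarrow> x \<in> rel_int_in (Rd d) K \<longrightarrow>
           y \<in> hilbert_ball (Rd d) K x rplus \<longrightarrow>
           (\<lambda>v. (1 / c0) *\<^sub>R v) ` macbeath K x \<subseteq> finsler_ball (Rd d) K y \<and>
           finsler_ball (Rd d) K y \<subseteq> (\<lambda>v. c0 *\<^sub>R v) ` macbeath K x"
proof -
  define R where "R = exp (2 * rplus)"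
  have R1: "R > 1" unfolding R_def using assms by simp
  define a where "a = R / (R - 1)"
  have a1: "a \<ge> 1" unfolding a_def using R1 by (simp add: field_simps)
  have ia: "1 - 1 / a = 1 / R" unfolding a_def using R1 by (simp add: field_simps)
  define c0 where "c0 = 3 * R"
  have c01: "c0 > 1" unfolding c0_def using R1 by simp
  have "\<forall>(d::nat) (K::vec set) (x::vec) (y::vec).
           convex_body_in (Rd d) K \<longrightarrow> x \<in> rel_int_in (Rd d) K \<longrightarrow>
           y \<in> hilbert_ball (Rd d) K x rplus \<longrightarrow>
           (\<lambda>v. (1 / c0) *\<^sub>R v) ` macbeath K x \<subseteq> finsler_ball (Rd d) K y \<and>
           finsler_ball (Rd d) K y \<subseteq> (\<lambda>v. c0 *\<^sub>R v) ` macbeath K x"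
  proof (intro allI impI)
    fix d K x y
    assume cb: "convex_body_in (Rd d) K" and x: "x \<in> rel_int_in (Rd d) K"
      and yb: "y \<in> hilbert_ball (Rd d) K x rplus"
    define V where "V = Rd d"
    have V: "subspace V" unfolding V_def by (rule subspace_Rd)
    have KV: "K \<subseteq> V" and cvK: "convex K" and cK: "compact K"
      using cb unfolding convex_body_in_def V_def by auto
    have x': "x \<in> rel_int_in V K" using x V_def by simp
    have y: "y \<in> rel_int_in V K" and hd: "hilbert_dist V K x y \<le> rplus"
      using yb unfolding hilbert_ball_def V_def by auto
    have xK: "x \<in> K" and yK: "y \<in> K" using x' y relint_sub by blast+
    have Q: "x + a *\<^sub>R (y - x) \<in> K \<and> y + a *\<^sub>R (x - y) \<in> K"
    proof (cases "x = y")
      case True then show ?thesis using xK by simp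
    next
      case False
      show ?thesis using hilbert_key[OF V KV cvK cK x' y False hd] unfolding a_def R_def .
    qed
    have L1: "y + m *\<^sub>R w \<in> K" if "x + w \<in> K" "0 \<le> m" "m \<le> 1 / R" for w m
      using shiftL[OF cvK xK _ a1 that(1) that(2)] Q ia that(3) by simp
    have L2: "x + m *\<^sub>R w \<in> K" if "y + w \<in> K" "0 \<le> m" "m \<le> 1 / R" for w m
      using shiftL[OF cvK yK _ a1 that(1) that(2)] Q ia that(3) by simp
    have c0R: "1 / c0 \<le> 1 / R" "1 / c0 \<ge> 0" unfolding c0_def using R1 by (auto simp: field_simps)
    show "(\<lambda>v. (1 / c0) *\<^sub>R v) ` macbeath K x \<subseteq> finsler_ball (Rd d) K y \<and>
           finsler_ball (Rd d) K y \<subseteq> (\<lambda>v. c0 *\<^sub>R v) ` macbeath K x"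
    proof
      show "(\<lambda>v. (1 / c0) *\<^sub>R v) ` macbeath K x \<subseteq> finsler_ball (Rd d) K y"
      proof
        fix z assume "z \<in> (\<lambda>v. (1 / c0) *\<^sub>R v) ` macbeath K x"
        then obtain k1 k2 where k: "k1 \<in> K" "k2 \<in> K" "z = (1 / c0) *\<^sub>R (k1 - x)"
          "k1 - x = x - k2" unfolding macbeath_def by auto
        have "x + (k1 - x) \<in> K" using k(1) by simp
        from L1[OF this c0R(2) c0R(1)] have A1: "y + z \<in> K" using k by simp
        have "x + (k2 - x) \<in> K" using k(2) by simp
        from L1[OF this c0R(2) c0R(1)] have A2: "y + (1 / c0) *\<^sub>R (k2 - x) \<in> K" .
        have "- z = (1 / c0) *\<^sub>R (k2 - x)" using k
          by (metis minus_diff_eq scaleR_minus_right)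
        then have A2': "y + - z \<in> K" using A2 by simp
        have zV: "z \<in> V" using k KV xK V
          by (metis in_mono subspace_diff subspace_scale)
        have "z \<in> (\<lambda>k. k - y) ` K" using A1 by (auto simp: image_iff intro!: bexI[of _ "y + z"])
        moreover have "- z \<in> (\<lambda>k. k - y) ` K" using A2' by (auto simp: image_iff intro!: bexI[of _ "y + - z"])
        ultimately show "z \<in> finsler_ball (Rd d) K y" using G1 zV V_def by metis
      qed
    next
      show "finsler_ball (Rd d) K y \<subseteq> (\<lambda>v. c0 *\<^sub>R v) ` macbeath K x"
      proof
        fix v assume "v \<in> finsler_ball (Rd d) K y"
        then have "v \<in> finsler_ball V K y" using V_def by simp
        from G2[OF V KV cvK y this] have B1: "y + (1/3) *\<^sub>R v \<in> K"
          and B2: "y + (1/3) *\<^sub>R (- v) \<in> K" by auto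
        have m: "0 \<le> 1 / R" "1 / R \<le> 1 / R" using R1 by auto
        define u where "u = (1 / R) *\<^sub>R ((1/3) *\<^sub>R v)"
        have C1: "x + u \<in> K" using L2[OF B1 m] unfolding u_def .
        have "x + (1 / R) *\<^sub>R ((1/3) *\<^sub>R (- v)) \<in> K" using L2[OF B2 m] .
        then have C2: "x - u \<in> K" unfolding u_def by simp
        have "u \<in> (\<lambda>k. k - x) ` K" using rev_image_eqI[OF C1, of u "\<lambda>k. k - x"] by simp
        moreover have "u \<in> (\<lambda>k. x - k) ` K" using rev_image_eqI[OF C2, of u "\<lambda>k. x - k"] by simp
        ultimately have "u \<in> macbeath K x" unfolding macbeath_def by blast
        moreover have "v = c0 *\<^sub>R u" unfolding u_def c0_def using R1 by simp
        ultimately show "v \<in> (\<lambda>v. c0 *\<^sub>R v) ` macbeath K x" by blast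
      qed
    qed
  qed
  then show ?thesis using c01 by blast
qed

end
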